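(* Let $m\ge1$ and let $x_0,\dots,x_{m-1}$ be indeterminates. In the ring of $m\times m$ matrices over $\mathbb{Q}(x_0,\dots,x_{m-1})$ (rows and columns indexed by $[0,m-1]$), define $V_x=(x_j^i)_{i,j}$; $E_x=((-1)^{i-j}E_{i-j,[0,i[})_{i,j}$, where $E_{d,[0,i[}$ is the elementary symmetric polynomial of degree $d$ in $x_0,\dots,x_{i-1}$ (with $E_{0,[0,i[}=1$ and $E_{d,[0,i[}=0$ for $d<0$ or $d>i$); $L_x=(L_{i,j})_{i,j}$ with $L_{i,j}=\prod_{k\in[0,j-1]\setminus\{i\}}(x_j-x_k)\big/\prod_{k\in[0,j-1]\setminus\{i\}}(x_i-x_k)$ if $i<j$ and $L_{i,j}=0$ if $i\ge j$; and $Y_x$ the diagonal matrix with $i$th entry $\prod_{k\in[0,i-1]}(x_i-x_k)$. Then \[ E_xV_x(I-L_x)=Y_x, \] where $I$ is the identity matrix.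
   Context: $[a,b]=\{x\in\mathbb{Z}:a\le x\le b\}$. *)

theory Defs
  imports Main "Jordan_Normal_Form.Matrix"
begin

definition esym :: "int \<Rightarrow> nat set \<Rightarrow> (nat \<Rightarrow> 'a::comm_ring_1) \<Rightarrow> 'a" where
  "esym d S x = (if d < 0 then 0 else
     (\<Sum>T\<in>{T. T \<subseteq> S \<and> card T = nat d}. \<Prod>k\<in>T. x k))"

definition Vmat :: "nat \<Rightarrow> (nat \<Rightarrow> 'a::field) \<Rightarrow> 'a mat" where
  "Vmat m x = mat m m (\<lambda>(i,j). x j ^ i)"

definition Emat :: "nat \<Rightarrow> (nat \<Rightarrow> 'a::field) \<Rightarrow> 'a mat" where
  "Emat m x = mat m m (\<lambda>(i,j).
     (-1) powi (int i - int j) * esym (int i - int j) {0..<i} x)"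

definition Lmat :: "nat \<Rightarrow> (nat \<Rightarrow> 'a::field) \<Rightarrow> 'a mat" where
  "Lmat m x = mat m m (\<lambda>(i,j). if i < j then
     (\<Prod>k\<in>{0..<j} - {i}. x j - x k) / (\<Prod>k\<in>{0..<j} - {i}. x i - x k) else 0)"

definition Ymat :: "nat \<Rightarrow> (nat \<Rightarrow> 'a::field) \<Rightarrow> 'a mat" where
  "Ymat m x = mat m m (\<lambda>(i,j). if i = j then (\<Prod>k\<in>{0..<i}. x i - x k) else 0)"

end

theory Submission
  imports Defs "HOL-Computational_Algebra.Polynomial"
begin

lemma interp:
  fixes x :: "nat \<Rightarrow> 'a::field"
  assumes inj: "inj_on x {0..<j}" and ij: "i < j"
  shows "(\<Sum>l\<in>{0..<j}. (\<Prod>k\<in>{0..<i}. x l - x k) *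
           ((\<Prod>k\<in>{0..<j}-{l}. t - x k) / (\<Prod>k\<in>{0..<j}-{l}. x l - x k)))
         = (\<Prod>k\<in>{0..<i}. t - x k)"
proof -
  define c where "c l = (\<Prod>k\<in>{0..<i}. x l - x k) / (\<Prod>k\<in>{0..<j}-{l}. x l - x k)" for l
  define p where "p = (\<Sum>l\<in>{0..<j}. smult (c l) (\<Prod>k\<in>{0..<j}-{l}. [:- x k, 1:]))"
  define q where "q = (\<Prod>k\<in>{0..<i}. [:- x k, 1:])"
  have pp: "poly p s = (\<Sum>l\<in>{0..<j}. c l * (\<Prod>k\<in>{0..<j}-{l}. s - x k))" for s
    unfolding p_def by (simp add: poly_sum poly_prod)
  have pq: "poly q s = (\<Prod>k\<in>{0..<i}. s - x k)" for s
    unfolding q_def by (simp add: poly_prod)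
  have dq: "degree q < j"
  proof -
    have "degree q \<le> (\<Sum>k\<in>{0..<i}. degree [:- x k, 1:])"
      unfolding q_def using degree_prod_sum_le[of "{0..<i}" "\<lambda>k. [:- x k, 1:]"] by (simp add: o_def)
    then show ?thesis using ij by simp
  qed
  have dp: "degree p < j"
  proof -
    have "degree p \<le> j - 1"
      unfolding p_def
    proof (rule degree_sum_le)
      fix l assume l: "l \<in> {0..<j}"
      have "degree (smult (c l) (\<Prod>k\<in>{0..<j}-{l}. [:- x k, 1:])) \<le> degree (\<Prod>k\<in>{0..<j}-{l}. [:- x k, 1:])"
        by (rule degree_smult_le)
      also have "\<dots> \<le> (\<Sum>k\<in>{0..<j}-{l}. degree [:- x k, 1:])"
        using degree_prod_sum_le[of "{0..<j}-{l}" "\<lambda>k. [:- x k, 1:]"] by (simp add: o_def)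
      also have "\<dots> = j - 1" using l by simp
      finally show "degree (smult (c l) (\<Prod>k\<in>{0..<j}-{l}. [:- x k, 1:])) \<le> j - 1" .
    qed simp
    then show ?thesis using ij by simp
  qed
  have roots: "poly p s = poly q s" if s: "s \<in> x ` {0..<j}" for s
  proof -
    obtain l0 where l0: "l0 \<in> {0..<j}" "s = x l0" using s by blast
    have z: "c l * (\<Prod>k\<in>{0..<j}-{l}. x l0 - x k) = 0" if "l \<in> {0..<j}-{l0}" for l
    proof -
      have "(\<Prod>k\<in>{0..<j}-{l}. x l0 - x k) = 0"
        using that l0 by (intro prod_zero) auto
      then show ?thesis by simp
    qed
    have D: "(\<Prod>k\<in>{0..<j}-{l0}. x l0 - x k) \<noteq> 0"
      using inj l0 by (subst prod_zero_iff) (auto simp: inj_on_def)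
    have "poly p s = c l0 * (\<Prod>k\<in>{0..<j}-{l0}. x l0 - x k)
         + (\<Sum>l\<in>{0..<j}-{l0}. c l * (\<Prod>k\<in>{0..<j}-{l}. x l0 - x k))"
      unfolding pp l0(2) using l0(1) by (subst sum.remove[of _ l0]) auto
    also have "\<dots> = c l0 * (\<Prod>k\<in>{0..<j}-{l0}. x l0 - x k)"
      using z by (simp add: sum.neutral)
    also have "\<dots> = (\<Prod>k\<in>{0..<i}. x l0 - x k)"
      using D by (simp add: c_def)
    finally show ?thesis using pq l0 by simp
  qed
  have card: "card (x ` {0..<j}) = j" using inj by (simp add: card_image)
  have "p = q" by (rule poly_eqI_degree[OF roots]) (use card dp dq in auto)
  then have "poly p t = poly q t" by simp
  then show ?thesis unfolding pp pq c_def by simp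
qed

lemma expand:
  fixes x :: "nat \<Rightarrow> 'a::comm_ring_1"
  assumes fin: "finite A"
  shows "(\<Prod>k\<in>A. t - x k) = (\<Sum>d=0..card A. (-1)^d * esym (int d) A x * t^(card A - d))"
proof -
  have "(\<Prod>k\<in>A. t - x k) = (\<Prod>k\<in>A. (- x k) + t)" by simp
  also have "\<dots> = (\<Sum>B\<in>Pow A. (\<Prod>k\<in>B. - x k) * (\<Prod>k\<in>A-B. t))"
    by (rule prod_add[OF fin])
  also have "\<dots> = (\<Sum>B\<in>Pow A. (-1)^card B * (\<Prod>k\<in>B. x k) * t^(card A - card B))"
  proof (rule sum.cong[OF refl])
    fix B assume B: "B \<in> Pow A"
    then have fB: "finite B" using fin finite_subset by auto
    have "(\<Prod>k\<in>B. - x k) = (-1)^card B * (\<Prod>k\<in>B. x k)"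
      by (simp add: prod_uminus)
    moreover have "(\<Prod>k\<in>A-B. t) = t^(card A - card B)"
      using B fB by (simp add: card_Diff_subset)
    ultimately show "(\<Prod>k\<in>B. - x k) * (\<Prod>k\<in>A-B. t) = (-1)^card B * (\<Prod>k\<in>B. x k) * t^(card A - card B)"
      by simp
  qed
  also have "\<dots> = (\<Sum>d=0..card A. \<Sum>B\<in>{B. B \<in> Pow A \<and> card B = d}. (-1)^card B * (\<Prod>k\<in>B. x k) * t^(card A - card B))"
    by (rule sum.group[symmetric]) (use fin in \<open>auto intro: card_mono\<close>)
  also have "\<dots> = (\<Sum>d=0..card A. (-1)^d * esym (int d) A x * t^(card A - d))"
  proof (rule sum.cong[OF refl])
    fix d
    have "(\<Sum>B\<in>{B. B \<in> Pow A \<and> card B = d}. (-1)^card B * (\<Prod>k\<in>B. x k) * t^(card A - card B))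
        = (\<Sum>B\<in>{B. B \<subseteq> A \<and> card B = d}. (-1)^d * (\<Prod>k\<in>B. x k) * t^(card A - d))"
      by (rule sum.cong) auto
    also have "\<dots> = (-1)^d * (\<Sum>B\<in>{B. B \<subseteq> A \<and> card B = d}. (\<Prod>k\<in>B. x k)) * t^(card A - d)"
      by (simp add: sum_distrib_left sum_distrib_right mult.assoc)
    finally show "(\<Sum>B\<in>{B. B \<in> Pow A \<and> card B = d}. (-1)^card B * (\<Prod>k\<in>B. x k) * t^(card A - card B))
        = (-1)^d * esym (int d) A x * t^(card A - d)"
      by (simp add: esym_def)
  qed
  finally show ?thesis .
qed

lemma expand2:
  fixes x :: "nat \<Rightarrow> 'a::comm_ring_1"
  shows "(\<Prod>k\<in>{0..<n}. t - x k) = (\<Sum>l=0..n. (-1)^(n-l) * esym (int (n-l)) {0..<n} x * t^l)"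
proof -
  have "(\<Prod>k\<in>{0..<n}. t - x k) = (\<Sum>d=0..n. (-1)^d * esym (int d) {0..<n} x * t^(n - d))"
    using expand[of "{0..<n}" t x] by simp
  also have "\<dots> = (\<Sum>l=0..n. (-1)^(n-l) * esym (int (n-l)) {0..<n} x * t^(n-(n-l)))"
    by (subst sum.atLeastAtMost_rev) simp
  also have "\<dots> = (\<Sum>l=0..n. (-1)^(n-l) * esym (int (n-l)) {0..<n} x * t^l)"
    by (rule sum.cong) auto
  finally show ?thesis .
qed

lemma EV:
  fixes x :: "nat \<Rightarrow> 'a::field"
  assumes "i < m" "j < m"
  shows "(Emat m x * Vmat m x) $$ (i,j) = (\<Prod>k\<in>{0..<i}. x j - x k)"
proof -
  have "(Emat m x * Vmat m x) $$ (i,j) = (\<Sum>l\<in>{0..<m}. (-1) powi (int i - int l) * esym (int i - int l) {0..<i} x * x j ^ l)"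
    using assms by (simp add: Emat_def Vmat_def scalar_prod_def)
  also have "\<dots> = (\<Sum>l\<in>{0..i}. (-1) powi (int i - int l) * esym (int i - int l) {0..<i} x * x j ^ l)"
    using assms by (intro sum.mono_neutral_right) (auto simp: esym_def)
  also have "\<dots> = (\<Sum>l=0..i. (-1)^(i-l) * esym (int (i-l)) {0..<i} x * x j^l)"
  proof (rule sum.cong[OF refl])
    fix l assume "l \<in> {0..i}"
    then have e: "int i - int l = int (i - l)" by auto
    show "(-1) powi (int i - int l) * esym (int i - int l) {0..<i} x * x j ^ l = (-1)^(i-l) * esym (int (i-l)) {0..<i} x * x j^l"
      by (simp only: e power_int_of_nat)
  qed
  also have "\<dots> = (\<Prod>k\<in>{0..<i}. x j - x k)" by (rule expand2[symmetric])
  finally show ?thesis .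
qed


lemma dims[simp]:
  "dim_row (Emat m x) = m" "dim_col (Emat m x) = m"
  "dim_row (Vmat m x) = m" "dim_col (Vmat m x) = m"
  "dim_row (Lmat m x) = m" "dim_col (Lmat m x) = m"
  by (simp_all add: Emat_def Vmat_def Lmat_def)

theorem proposition1p7:
  fixes m :: nat and x :: "nat \<Rightarrow> 'a::field_char_0"
  assumes "m \<ge> 1"
    and "inj_on x {0..<m}"
  shows "Emat m x * Vmat m x * (1\<^sub>m m - Lmat m x) = Ymat m x"
proof (rule eq_matI)
  show "dim_row (Emat m x * Vmat m x * (1\<^sub>m m - Lmat m x)) = dim_row (Ymat m x)"
    by (simp add: Emat_def Ymat_def)
  show "dim_col (Emat m x * Vmat m x * (1\<^sub>m m - Lmat m x)) = dim_col (Ymat m x)"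
    by (simp add: Lmat_def Ymat_def)
  fix i j assume i: "i < dim_row (Ymat m x)" and j: "j < dim_col (Ymat m x)"
  then have im: "i < m" and jm: "j < m" by (auto simp: Ymat_def)
  define P where "P t = (\<Prod>k\<in>{0..<i}. t - x k)" for t
  define R where "R l = (\<Prod>k\<in>{0..<j}-{l}. x j - x k) / (\<Prod>k\<in>{0..<j}-{l}. x l - x k)" for l
  have "(Emat m x * Vmat m x * (1\<^sub>m m - Lmat m x)) $$ (i,j)
      = (\<Sum>l\<in>{0..<m}. (Emat m x * Vmat m x) $$ (i,l) * (1\<^sub>m m - Lmat m x) $$ (l,j))"
    using im jm by (simp add: scalar_prod_def)
  also have "\<dots> = (\<Sum>l\<in>{0..<m}. P (x l) * ((if l = j then 1 else 0) - (if l < j then R l else 0)))"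
  proof (rule sum.cong[OF refl])
    fix l assume l: "l \<in> {0..<m}"
    have a: "(Emat m x * Vmat m x) $$ (i,l) = P (x l)" using EV[OF im, of l] l by (simp add: P_def)
    have b: "(1\<^sub>m m - Lmat m x) $$ (l,j) = (if l = j then 1 else 0) - (if l < j then R l else 0)"
      using l jm by (simp add: Lmat_def R_def)
    show "(Emat m x * Vmat m x) $$ (i,l) * (1\<^sub>m m - Lmat m x) $$ (l,j) = P (x l) * ((if l = j then 1 else 0) - (if l < j then R l else 0))"
      by (simp only: a b)
  qed
  also have "\<dots> = (\<Sum>l\<in>{0..<m}. (if l = j then P (x l) else 0)) - (\<Sum>l\<in>{0..<m}. (if l < j then P (x l) * R l else 0))"
    by (subst sum_subtractf[symmetric]) (intro sum.cong refl, auto)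
  also have "\<dots> = P (x j) - (\<Sum>l\<in>{0..<j}. P (x l) * R l)"
  proof -
    have "(\<Sum>l\<in>{0..<m}. (if l < j then P (x l) * R l else 0)) = (\<Sum>l\<in>{0..<j}. (if l < j then P (x l) * R l else 0))"
      using jm by (intro sum.mono_neutral_right) auto
    then show ?thesis using jm by simp
  qed
  finally have ent: "(Emat m x * Vmat m x * (1\<^sub>m m - Lmat m x)) $$ (i,j) = P (x j) - (\<Sum>l\<in>{0..<j}. P (x l) * R l)" .
  show "(Emat m x * Vmat m x * (1\<^sub>m m - Lmat m x)) $$ (i,j) = Ymat m x $$ (i,j)"
  proof (cases "i < j")
    case True
    have inj: "inj_on x {0..<j}" using assms(2) jm by (auto intro: inj_on_subset)
    have "(\<Sum>l\<in>{0..<j}. P (x l) * R l) = P (x j)"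
      unfolding P_def R_def by (rule interp[OF inj True])
    then show ?thesis using ent True im jm by (simp add: Ymat_def)
  next
    case False
    have z: "P (x l) = 0" if "l < i" for l
      unfolding P_def using that by (intro prod_zero) auto
    have "(\<Sum>l\<in>{0..<j}. P (x l) * R l) = 0"
      using False z by (intro sum.neutral) auto
    then have e2: "(Emat m x * Vmat m x * (1\<^sub>m m - Lmat m x)) $$ (i,j) = P (x j)" using ent by simp
    show ?thesis
    proof (cases "i = j")
      case True then show ?thesis using e2 im by (simp add: Ymat_def P_def)
    next
      case False
      then have "j < i" using \<open>\<not> i < j\<close> by simp
      then show ?thesis using e2 z im jm by (simp add: Ymat_def)
    qed
  qed
qed

end
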